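(* Let $T$ be a rooted binary phylogenetic tree under the $N_r$ model with state set $\{\alpha_1,\dots,\alpha_r\}$. Then for every $1\le k\le r-1$, $P_k(T)\ge Q_k(T)$.
   Context: A rooted binary phylogenetic tree is a finite tree with a distinguished root vertex $\rho$ of out-degree 2, all edges directed away from $\rho$, and every other vertex of in-degree 1 and out-degree 0 or 2; out-degree-0 vertices are leaves. Under the Neyman $r$-state model $N_r$ ($r\ge2$) on $\mathcal A=\{\alpha_1,\dots,\alpha_r\}$, each edge $e$ carries a substitution probability $p_e\in[0,\frac{r-1}{r}]$; given $F(\rho)$, states propagate independently along edges: for an edge $(u,v)$, $F(v)=F(u)$ with probability $1-p_e$, and otherwise $F(v)$ is uniform among the $r-1$ other states; $f$ is the restriction of $F$ to the leaves. Fitch sets: each leaf $x$ gets $\{f(x)\}$; a vertex with children $v_1,v_2$ gets $\mathrm{FS}(v_1)\cap\mathrm{FS}(v_2)$ if nonempty, else the union; $\mathrm{FS}(f,T)$ is the Fitch set of $\rho$. $P_k(T)=\mathbb P(\mathrm{FS}(f,T)=\mathcal R\mid F(\rho)=\alpha_1)$ for any $\mathcal R\subseteq\mathcal A$ with $\alpha_1\in\mathcal R$, $|\mathcal R|=k$, and $Q_k(T)=\mathbb P(\mathrm{FS}(f,T)=\mathcal R\mid F(\rho)=\alpha_1)$ for any $\mathcal R$ with $\alpha_1\notin\mathcal R$, $|\mathcal R|=k$ (independent of the choice of $\mathcal R$ by symmetry). *)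

theory Defs
  imports "HOL-Probability.Probability"
begin

text \<open>States alpha_1..alpha_r are encoded as 0..r-1 (alpha_1 = 0).
A rooted binary tree: a leaf, or a vertex with two children; Node p1 t1 p2 t2
has edges to t1 and t2 carrying substitution probabilities p1 and p2.
Leaves are identified by their left-to-right position.\<close>

datatype ptree = Leaf | Node real ptree real ptree

fun nleaves :: "ptree \<Rightarrow> nat" where
  "nleaves Leaf = 1"
| "nleaves (Node _ t1 _ t2) = nleaves t1 + nleaves t2"

fun edge_probs :: "ptree \<Rightarrow> real set" where
  "edge_probs Leaf = {}"
| "edge_probs (Node p1 t1 p2 t2) = {p1, p2} \<union> edge_probs t1 \<union> edge_probs t2"

definition nr_step :: "nat \<Rightarrow> real \<Rightarrow> nat \<Rightarrow> nat pmf" where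
  "nr_step r p a = bind_pmf (bernoulli_pmf p)
     (\<lambda>change. if change then pmf_of_set ({0..<r} - {a}) else return_pmf a)"

text \<open>Distribution of the leaf character f (list of leaf states, left to right)
given the state of the root of the (sub)tree.\<close>
fun nr_char :: "nat \<Rightarrow> ptree \<Rightarrow> nat \<Rightarrow> nat list pmf" where
  "nr_char r Leaf a = return_pmf [a]"
| "nr_char r (Node p1 t1 p2 t2) a =
     bind_pmf (nr_step r p1 a) (\<lambda>b1.
     bind_pmf (nr_step r p2 a) (\<lambda>b2.
     bind_pmf (nr_char r t1 b1) (\<lambda>f1.
     bind_pmf (nr_char r t2 b2) (\<lambda>f2.
     return_pmf (f1 @ f2)))))"

fun fitch :: "ptree \<Rightarrow> nat list \<Rightarrow> nat set" where
  "fitch Leaf f = {hd f}"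
| "fitch (Node _ t1 _ t2) f =
     (let A = fitch t1 (take (nleaves t1) f);
          B = fitch t2 (drop (nleaves t1) f)
      in if A \<inter> B \<noteq> {} then A \<inter> B else A \<union> B)"

definition fitch_prob :: "nat \<Rightarrow> ptree \<Rightarrow> nat set \<Rightarrow> real" where
  "fitch_prob r T R = measure_pmf.prob (nr_char r T 0) {f. fitch T f = R}"

end

theory Submission
  imports Defs
begin

definition comb :: "nat set \<Rightarrow> nat set \<Rightarrow> nat set" where
  "comb A B = (if A \<inter> B \<noteq> {} then A \<inter> B else A \<union> B)"

fun fdist :: "nat \<Rightarrow> ptree \<Rightarrow> nat \<Rightarrow> nat set pmf" where
  "fdist r Leaf a = return_pmf {a}"
| "fdist r (Node p1 t1 p2 t2) a =
     bind_pmf (bind_pmf (nr_step r p1 a) (\<lambda>b. fdist r t1 b)) (\<lambda>A.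
     bind_pmf (bind_pmf (nr_step r p2 a) (\<lambda>b. fdist r t2 b)) (\<lambda>B. return_pmf (comb A B)))"

lemma pmf_bind_sum:
  assumes "finite A" "set_pmf M \<subseteq> A"
  shows "pmf (bind_pmf M f) x = (\<Sum>a\<in>A. pmf M a * pmf (f a) x)"
  using assms by (subst pmf_bind, subst integral_measure_pmf[of A]) auto

lemma ne_lemma:
  assumes "r \<ge> (2::nat)" "a < r"
  shows "{0..<r} - {a} \<noteq> {}"
proof (cases "a = 0")
  case True
  then have "1 \<in> {0..<r} - {a}" using assms by auto
  then show ?thesis by blast
next
  case False
  then have "0 \<in> {0..<r} - {a}" using assms by auto
  then show ?thesis by blast
qed

lemma nr_step_set:
  assumes "r \<ge> 2" "a < r"
  shows "set_pmf (nr_step r p a) \<subseteq> {0..<r}"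
proof -
  have ne: "{0..<r} - {a} \<noteq> {}" using ne_lemma assms by blast
  show ?thesis unfolding nr_step_def using ne assms by (auto simp: set_pmf_of_set[OF ne] split: if_splits)
qed

lemma nr_step_pmf:
  assumes "r \<ge> 2" "a < r" "0 \<le> p" "p \<le> 1"
  shows "pmf (nr_step r p a) b = (if b = a then 1 - p else if b < r then p / (real r - 1) else 0)"
proof -
  have ne: "{0..<r} - {a} \<noteq> {}" using ne_lemma assms by blast
  have c: "card ({0..<r} - {a}) = r - 1" using assms by simp
  show ?thesis unfolding nr_step_def pmf_bind using assms ne c
    by (auto simp: indicator_def of_nat_diff)
qed


lemma comb_sub: "comb A B \<subseteq> A \<union> B" unfolding comb_def by auto

lemma fdist_set:
  assumes "r \<ge> 2" "a < r"
  shows "set_pmf (fdist r T a) \<subseteq> Pow {0..<r}"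
  using assms(2)
proof (induction T arbitrary: a)
  case Leaf then show ?case by simp
next
  case (Node p1 t1 p2 t2)
  have s1: "set_pmf (nr_step r p1 a) \<subseteq> {0..<r}" "set_pmf (nr_step r p2 a) \<subseteq> {0..<r}"
    using nr_step_set[OF assms(1) Node.prems] by auto
  show ?case
  proof
    fix X assume "X \<in> set_pmf (fdist r (Node p1 t1 p2 t2) a)"
    then obtain b1 A b2 B where h: "b1 \<in> set_pmf (nr_step r p1 a)" "A \<in> set_pmf (fdist r t1 b1)"
      "b2 \<in> set_pmf (nr_step r p2 a)" "B \<in> set_pmf (fdist r t2 b2)" "X = comb A B" by auto
    have "b1 < r" "b2 < r" using h s1 by auto
    then have "A \<subseteq> {0..<r}" "B \<subseteq> {0..<r}" using Node.IH h by blast+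
    then show "X \<in> Pow {0..<r}" using h(5) comb_sub by blast
  qed
qed

lemma comb_image: "inj \<pi> \<Longrightarrow> \<pi> ` comb A B = comb (\<pi> ` A) (\<pi> ` B)"
  unfolding comb_def by (auto simp: image_Int[symmetric] image_Un)

lemma step_equiv:
  assumes "r \<ge> 2" "a < r" "bij \<pi>" "\<pi> ` {0..<r} = {0..<r}"
  shows "map_pmf \<pi> (nr_step r p a) = nr_step r p (\<pi> a)"
proof -
  have ne: "{0..<r} - {a} \<noteq> {}" using ne_lemma assms by blast
  have inj: "inj \<pi>" using assms bij_is_inj by blast
  have im: "\<pi> ` ({0..<r} - {a}) = {0..<r} - {\<pi> a}"
    using inj assms(4) by (simp add: image_set_diff)
  show ?thesis unfolding nr_step_def map_bind_pmf
    apply (rule bind_pmf_cong, simp)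
    using ne im inj by (auto simp: map_pmf_of_set_inj inj_on_subset[OF inj])
qed

lemma fdist_equiv:
  assumes "r \<ge> 2" "a < r" "bij \<pi>" "\<pi> ` {0..<r} = {0..<r}"
  shows "map_pmf (image \<pi>) (fdist r T a) = fdist r T (\<pi> a)"
  using assms(2)
proof (induction T arbitrary: a)
  case Leaf then show ?case by simp
next
  case (Node p1 t1 p2 t2)
  have inj: "inj \<pi>" using assms bij_is_inj by blast
  have E: "map_pmf (image \<pi>) (bind_pmf (nr_step r p a) (\<lambda>b. fdist r t b)) 
      = bind_pmf (nr_step r p (\<pi> a)) (\<lambda>b. fdist r t b)"
    if IH: "\<And>b. b < r \<Longrightarrow> map_pmf (image \<pi>) (fdist r t b) = fdist r t (\<pi> b)" for p t
  proof -
    have "map_pmf (image \<pi>) (bind_pmf (nr_step r p a) (\<lambda>b. fdist r t b))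
       = bind_pmf (nr_step r p a) (\<lambda>b. fdist r t (\<pi> b))"
      unfolding map_bind_pmf
      apply (rule bind_pmf_cong, simp)
    proof -
      fix x assume "x \<in> set_pmf (nr_step r p a)"
      then have "x < r" using nr_step_set[OF assms(1) Node.prems, of p] by auto
      then show "map_pmf (image \<pi>) (fdist r t x) = fdist r t (\<pi> x)" using IH by blast
    qed
    also have "\<dots> = bind_pmf (map_pmf \<pi> (nr_step r p a)) (\<lambda>b. fdist r t b)"
      by (simp add: bind_map_pmf)
    finally show ?thesis using step_equiv[OF assms(1) Node.prems assms(3,4)] by simp
  qed
  note E1 = E[OF Node.IH(1)] and E2 = E[OF Node.IH(2)]
  let ?E1 = "bind_pmf (nr_step r p1 a) (\<lambda>b. fdist r t1 b)"
  let ?E2 = "bind_pmf (nr_step r p2 a) (\<lambda>b. fdist r t2 b)"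
  have "fdist r (Node p1 t1 p2 t2) (\<pi> a) = bind_pmf (map_pmf (image \<pi>) ?E1) (\<lambda>A.
          bind_pmf (map_pmf (image \<pi>) ?E2) (\<lambda>B. return_pmf (comb A B)))"
    by (simp only: fdist.simps E1 E2)
  also have "\<dots> = bind_pmf ?E1 (\<lambda>A. bind_pmf ?E2 (\<lambda>B. return_pmf (comb (\<pi> ` A) (\<pi> ` B))))"
    by (simp add: bind_map_pmf)
  also have "\<dots> = bind_pmf ?E1 (\<lambda>A. bind_pmf ?E2 (\<lambda>B. return_pmf (\<pi> ` comb A B)))"
    by (simp add: comb_image[OF inj])
  also have "\<dots> = map_pmf (image \<pi>) (fdist r (Node p1 t1 p2 t2) a)"
    by (simp add: map_bind_pmf)
  finally show ?case by simp
qed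


lemma nr_char_len: "f \<in> set_pmf (nr_char r T a) \<Longrightarrow> length f = nleaves T"
  by (induction T arbitrary: a f) auto

lemma conn: "map_pmf (fitch T) (nr_char r T a) = fdist r T a"
proof (induction T arbitrary: a)
  case Leaf then show ?case by simp
next
  case (Node p1 t1 p2 t2)
  let ?s1 = "nr_step r p1 a" and ?s2 = "nr_step r p2 a"
  have "map_pmf (fitch (Node p1 t1 p2 t2)) (nr_char r (Node p1 t1 p2 t2) a)
    = bind_pmf ?s1 (\<lambda>b1. bind_pmf ?s2 (\<lambda>b2. bind_pmf (nr_char r t1 b1) (\<lambda>f1.
        bind_pmf (nr_char r t2 b2) (\<lambda>f2. return_pmf (fitch (Node p1 t1 p2 t2) (f1 @ f2))))))"
    by (simp add: map_bind_pmf)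
  also have "\<dots> = bind_pmf ?s1 (\<lambda>b1. bind_pmf ?s2 (\<lambda>b2. bind_pmf (nr_char r t1 b1) (\<lambda>f1.
        bind_pmf (nr_char r t2 b2) (\<lambda>f2. return_pmf (comb (fitch t1 f1) (fitch t2 f2))))))"
    apply (intro bind_pmf_cong refl)
    using nr_char_len by (simp add: comb_def Let_def)
  also have "\<dots> = bind_pmf ?s1 (\<lambda>b1. bind_pmf ?s2 (\<lambda>b2. bind_pmf (fdist r t1 b1) (\<lambda>A.
        bind_pmf (fdist r t2 b2) (\<lambda>B. return_pmf (comb A B)))))"
    by (simp add: Node.IH[symmetric] bind_map_pmf)
  also have "\<dots> = fdist r (Node p1 t1 p2 t2) a"
    by (simp add: bind_assoc_pmf bind_commute_pmf[of "fdist r t1 _" ?s2])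
  finally show ?case .
qed

lemma fitch_prob_eq: "fitch_prob r T R = pmf (fdist r T 0) R"
  unfolding fitch_prob_def conn[symmetric, where T=T and r=r and a=0] measure_pmf_single[symmetric] measure_map_pmf
  by (simp add: vimage_def)

lemma pmf_equiv:
  assumes "r \<ge> 2" "a < r" "bij \<pi>" "\<pi> ` {0..<r} = {0..<r}"
  shows "pmf (fdist r T (\<pi> a)) (\<pi> ` S) = pmf (fdist r T a) S"
proof -
  have "inj (image \<pi>)" using assms(3) by (meson bij_is_inj injI inj_image_eq_iff)
  then show ?thesis using fdist_equiv[OF assms, of T, symmetric] pmf_map_inj' by metis
qed

lemma E_equiv:
  assumes "r \<ge> 2" "a < r" "bij \<pi>" "\<pi> ` {0..<r} = {0..<r}"
  shows "pmf (bind_pmf (nr_step r p (\<pi> a)) (\<lambda>b. fdist r t b)) (\<pi> ` S)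
       = pmf (bind_pmf (nr_step r p a) (\<lambda>b. fdist r t b)) S"
proof -
  have "map_pmf (image \<pi>) (bind_pmf (nr_step r p a) (\<lambda>b. fdist r t b)) 
      = bind_pmf (nr_step r p (\<pi> a)) (\<lambda>b. fdist r t b)"
  proof -
    have "map_pmf (image \<pi>) (bind_pmf (nr_step r p a) (\<lambda>b. fdist r t b))
       = bind_pmf (nr_step r p a) (\<lambda>b. fdist r t (\<pi> b))"
      unfolding map_bind_pmf
      apply (rule bind_pmf_cong, simp)
    proof -
      fix x assume "x \<in> set_pmf (nr_step r p a)"
      then have "x < r" using nr_step_set[OF assms(1,2), of p] by auto
      then show "map_pmf (image \<pi>) (fdist r t x) = fdist r t (\<pi> x)" using fdist_equiv assms by blast
    qed
    also have "\<dots> = bind_pmf (map_pmf \<pi> (nr_step r p a)) (\<lambda>b. fdist r t b)"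
      by (simp add: bind_map_pmf)
    finally show ?thesis using step_equiv[OF assms] by simp
  qed
  moreover have "inj (image \<pi>)" using assms(3) by (meson bij_is_inj injI inj_image_eq_iff)
  ultimately show ?thesis using pmf_map_inj' by metis
qed


definition sw :: "nat \<Rightarrow> nat \<Rightarrow> nat" where
  "sw c x = (if x = 0 then c else if x = c then 0 else x)"

lemma sw_bij: "bij (sw c)"
proof -
  have "inj (sw c)" by (auto simp: inj_def sw_def split: if_splits)
  moreover have "surj (sw c)"
    by (metis (no_types, lifting) sw_def surj_def)
  ultimately show ?thesis by (simp add: bij_def)
qed

lemma sw_im: "c < r \<Longrightarrow> 0 < r \<Longrightarrow> sw c ` {0..<r} = {0..<r}"
  by (auto simp: sw_def)

lemma sw_fix: "(0 \<in> A \<longleftrightarrow> c \<in> A) \<Longrightarrow> sw c ` A = A"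
  by (auto simp: sw_def image_iff)

lemma E_set:
  assumes "r \<ge> 2" "a < r"
  shows "set_pmf (bind_pmf (nr_step r p a) (\<lambda>b. fdist r t b)) \<subseteq> Pow {0..<r}"
  using nr_step_set[OF assms] fdist_set[OF assms(1)] by (auto simp: subset_iff) blast

lemma step_sum:
  assumes "r \<ge> 2" "a < r" "0 \<le> p" "p \<le> 1"
  shows "pmf (bind_pmf (nr_step r p a) (\<lambda>b. fdist r t b)) S
     = (1 - p - p / (real r - 1)) * pmf (fdist r t a) S + p / (real r - 1) * (\<Sum>b\<in>{0..<r}. pmf (fdist r t b) S)"
proof -
  let ?K = "1 - p - p / (real r - 1)" and ?q = "p / (real r - 1)"
  have "pmf (bind_pmf (nr_step r p a) (\<lambda>b. fdist r t b)) S
     = (\<Sum>b\<in>{0..<r}. pmf (nr_step r p a) b * pmf (fdist r t b) S)"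
    by (rule pmf_bind_sum) (use nr_step_set[OF assms(1,2)] in auto)
  also have "\<dots> = (\<Sum>b\<in>{0..<r}. (?K * (if b = a then 1 else 0) + ?q) * pmf (fdist r t b) S)"
    by (rule sum.cong) (auto simp: nr_step_pmf[OF assms])
  also have "\<dots> = (\<Sum>b\<in>{0..<r}. (if b = a then ?K * pmf (fdist r t b) S else 0) + ?q * pmf (fdist r t b) S)"
    by (rule sum.cong) (auto simp: algebra_simps)
  also have "\<dots> = (\<Sum>b\<in>{0..<r}. (if b = a then ?K * pmf (fdist r t b) S else 0)) + (\<Sum>b\<in>{0..<r}. ?q * pmf (fdist r t b) S)"
    by (rule sum.distrib)
  also have "\<dots> = ?K * pmf (fdist r t a) S + ?q * (\<Sum>b\<in>{0..<r}. pmf (fdist r t b) S)"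
    using assms(2) by (simp add: sum.delta' sum_distrib_left)
  finally show ?thesis .
qed

lemma comb_good:
  assumes "comb A B = S" "0 \<in> S" "c \<notin> S"
  shows "((0::nat) \<in> A \<and> c \<notin> A) \<or> (0 \<in> A \<longleftrightarrow> c \<in> A)"
  using assms unfolding comb_def by (auto split: if_splits)

lemma comb_sym: "comb A B = comb B A" unfolding comb_def by auto


lemma edge_mono:
  assumes r: "r \<ge> 2" and c: "0 < c" "c < r" and p: "0 \<le> p" "p \<le> (real r - 1) / real r"
    and IH: "\<And>S. 0 \<in> S \<Longrightarrow> c \<notin> S \<Longrightarrow> pmf (fdist r t c) S \<le> pmf (fdist r t 0) S"
    and A: "((0::nat) \<in> A \<and> c \<notin> A) \<or> (0 \<in> A \<longleftrightarrow> c \<in> A)"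
  shows "pmf (bind_pmf (nr_step r p c) (\<lambda>b. fdist r t b)) A \<le> pmf (bind_pmf (nr_step r p 0) (\<lambda>b. fdist r t b)) A"
proof (cases "0 \<in> A \<and> c \<notin> A")
  case True
  have rr: "real r - 1 > 0" "real r > 0" using r by auto
  have "(real r - 1) / real r \<le> 1" using rr by simp
  then have p1: "p \<le> 1" using p(2) by linarith
  have K: "1 - p - p / (real r - 1) \<ge> 0"
  proof -
    have "p * real r \<le> real r - 1" using p(2) rr by (simp add: le_divide_eq)
    then have "p \<le> (1 - p) * (real r - 1)" by (simp add: algebra_simps)
    then have "p / (real r - 1) \<le> 1 - p" using rr by (simp add: divide_le_eq)
    then show ?thesis by simp
  qed
  show ?thesis
    unfolding step_sum[OF r c(2) p(1) p1] step_sum[OF r _ p(1) p1, of 0, OF order.strict_trans[OF c]]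
    using mult_left_mono[OF IH[OF conjunct1[OF True] conjunct2[OF True]] K] by simp
next
  case False
  then have fx: "sw c ` A = A" using A sw_fix by blast
  have "sw c 0 = c" by (simp add: sw_def)
  then show ?thesis using E_equiv[OF r _ sw_bij sw_im[OF c(2)], of 0 p t A] fx c by simp
qed

lemma node_pmf:
  assumes "r \<ge> 2" "a < r"
  shows "pmf (fdist r (Node p1 t1 p2 t2) a) S =
    (\<Sum>A\<in>Pow {0..<r}. \<Sum>B\<in>Pow {0..<r}.
       (if comb A B = S then pmf (bind_pmf (nr_step r p1 a) (\<lambda>b. fdist r t1 b)) A
          * pmf (bind_pmf (nr_step r p2 a) (\<lambda>b. fdist r t2 b)) B else 0))"
  apply (simp only: fdist.simps)
  apply (subst pmf_bind_sum[of "Pow {0..<r}"], simp, rule E_set[OF assms])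
  apply (subst pmf_bind_sum[of "Pow {0..<r}"], simp, rule E_set[OF assms])
  unfolding sum_distrib_left
  by (intro sum.cong refl) (simp add: indicator_def)

lemma main_mono:
  assumes "r \<ge> 2" "\<forall>p \<in> edge_probs T. 0 \<le> p \<and> p \<le> (real r - 1) / real r" "0 < c" "c < r"
  shows "0 \<in> S \<Longrightarrow> c \<notin> S \<Longrightarrow> pmf (fdist r T c) S \<le> pmf (fdist r T 0) S"
  using assms(2)
proof (induction T arbitrary: S)
  case Leaf then show ?case by (auto simp: indicator_def)
next
  case (Node p1 t1 p2 t2)
  have c0: "0 < r" using assms by auto
  have e1: "pmf (bind_pmf (nr_step r p1 c) (\<lambda>b. fdist r t1 b)) A \<le> pmf (bind_pmf (nr_step r p1 0) (\<lambda>b. fdist r t1 b)) A"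
    if "((0::nat) \<in> A \<and> c \<notin> A) \<or> (0 \<in> A \<longleftrightarrow> c \<in> A)" for A
    apply (rule edge_mono[OF assms(1,3,4)])
    using Node.prems Node.IH(1) that by auto
  have e2: "pmf (bind_pmf (nr_step r p2 c) (\<lambda>b. fdist r t2 b)) A \<le> pmf (bind_pmf (nr_step r p2 0) (\<lambda>b. fdist r t2 b)) A"
    if "((0::nat) \<in> A \<and> c \<notin> A) \<or> (0 \<in> A \<longleftrightarrow> c \<in> A)" for A
    apply (rule edge_mono[OF assms(1,3,4)])
    using Node.prems Node.IH(2) that by auto
  show ?case
    unfolding node_pmf[OF assms(1,4)] node_pmf[OF assms(1) c0]
  proof (intro sum_mono)
    fix A B assume "A \<in> Pow {0..<r}" "B \<in> Pow {0..<r}"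
    show "(if comb A B = S then pmf (bind_pmf (nr_step r p1 c) (\<lambda>b. fdist r t1 b)) A
          * pmf (bind_pmf (nr_step r p2 c) (\<lambda>b. fdist r t2 b)) B else 0)
       \<le> (if comb A B = S then pmf (bind_pmf (nr_step r p1 0) (\<lambda>b. fdist r t1 b)) A
          * pmf (bind_pmf (nr_step r p2 0) (\<lambda>b. fdist r t2 b)) B else 0)"
    proof (cases "comb A B = S")
      case True
      have gA: "((0::nat) \<in> A \<and> c \<notin> A) \<or> (0 \<in> A \<longleftrightarrow> c \<in> A)"
        using comb_good[OF True Node.prems(1,2)] .
      have gB: "((0::nat) \<in> B \<and> c \<notin> B) \<or> (0 \<in> B \<longleftrightarrow> c \<in> B)"
        using comb_good[of B A S c] True comb_sym Node.prems(1,2) by metis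
      show ?thesis using True by (simp add: mult_mono e1[OF gA] e2[OF gB])
    qed simp
  qed
qed


lemma perm_exists:
  assumes "R' \<subseteq> {1..<r}" "X \<subseteq> {1..<r}" "card R' = card X"
  shows "\<exists>\<pi>. bij \<pi> \<and> \<pi> ` {0..<r} = {0..<r} \<and> \<pi> 0 = (0::nat) \<and> \<pi> ` R' = X"
proof -
  have fin: "finite R'" "finite X" using assms finite_subset by blast+
  obtain f where f: "bij_betw f R' X" using finite_same_card_bij[OF fin assms(3)] by blast
  have "card ({1..<r} - R') = card ({1..<r} - X)"
    using assms fin by (simp add: card_Diff_subset)
  then obtain h where h: "bij_betw h ({1..<r} - R') ({1..<r} - X)"
    using finite_same_card_bij by (meson finite_Diff finite_atLeastLessThan)
  define q where "q x = (if x \<in> R' then f x else h x)" for x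
  have q: "bij_betw q (R' \<union> ({1..<r} - R')) (X \<union> ({1..<r} - X))"
    unfolding q_def by (rule bij_betw_disjoint_Un[OF f h]) auto
  have e1: "R' \<union> ({1..<r} - R') = {1..<r}" "X \<union> ({1..<r} - X) = {1..<r}" using assms by auto
  define \<pi> where "\<pi> x = (if x \<in> {1..<r} then q x else id x)" for x
  have "bij_betw \<pi> ({1..<r} \<union> - {1..<r}) ({1..<r} \<union> - {1..<r})"
    unfolding \<pi>_def by (rule bij_betw_disjoint_Un) (use q e1 in \<open>auto simp: bij_betw_def\<close>)
  then have b: "bij \<pi>" by simp
  have qim: "q ` {1..<r} = {1..<r}" using q e1 bij_betw_imp_surj_on by metis
  have pz: "\<pi> 0 = 0" unfolding \<pi>_def by simp
  have "\<pi> ` {0..<r} = {0..<r}"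
  proof -
    have "{0..<r} = (if r = 0 then {} else insert 0 {1..<r})" by auto
    moreover have "\<pi> ` {1..<r} = {1..<r}" using qim unfolding \<pi>_def by simp
    moreover have "\<pi> 0 = 0" unfolding \<pi>_def by simp
    ultimately show ?thesis by auto
  qed
  moreover have "\<pi> ` R' = X"
  proof -
    have "\<pi> ` R' = f ` R'" using assms(1) unfolding \<pi>_def q_def by (intro image_cong) auto
    then show ?thesis using f bij_betw_imp_surj_on by metis
  qed
  ultimately show ?thesis using b pz by blast
qed

theorem theorem6:
  fixes r k :: nat and T :: ptree and R R' :: "nat set"
  assumes "r \<ge> 2"
    and "T \<noteq> Leaf"
    and "\<forall>p \<in> edge_probs T. 0 \<le> p \<and> p \<le> (real r - 1) / real r"
    and "1 \<le> k" and "k \<le> r - 1"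
    and "R \<subseteq> {0..<r}" and "0 \<in> R" and "card R = k"
    and "R' \<subseteq> {0..<r}" and "0 \<notin> R'" and "card R' = k"
  shows "fitch_prob r T R \<ge> fitch_prob r T R'"
proof -
  have "\<not> {0..<r} \<subseteq> R"
  proof
    assume "{0..<r} \<subseteq> R"
    then have "card {0..<r} \<le> card R" using assms(6) by (intro card_mono) (auto intro: finite_subset)
    then show False using assms by simp
  qed
  then obtain c where "c \<in> {0..<r}" "c \<notin> R" by blast
  then have c: "c < r" "c \<notin> R" by auto
  have c0: "0 < c" using c assms(7) by (cases c) auto
  define X where "X = sw c ` R"
  have inj: "inj (sw c)" using sw_bij bij_is_inj by blast
  have X1: "X \<subseteq> {1..<r}"
    using assms(6) c c0 unfolding X_def sw_def by auto
  have X2: "card X = k" unfolding X_def using card_image[OF inj_on_subset[OF inj]] assms(8) by auto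
  have R'1: "R' \<subseteq> {1..<r}"
  proof
    fix x assume "x \<in> R'"
    have "x < r" using \<open>x \<in> R'\<close> assms(9) by auto
    moreover have "x \<noteq> 0" using \<open>x \<in> R'\<close> assms(10) by metis
    ultimately
    show "x \<in> {1..<r}" by simp
  qed
  obtain \<pi> where \<pi>: "bij \<pi>" "\<pi> ` {0..<r} = {0..<r}" "\<pi> 0 = 0" "\<pi> ` R' = X"
    using perm_exists[OF R'1 X1] X2 assms(11) by auto
  have sw_cc: "sw c c = 0" by (simp add: sw_def)
  have "pmf (fdist r T 0) R' = pmf (fdist r T 0) X"
    using pmf_equiv[OF assms(1) _ \<pi>(1,2), of 0 T R'] \<pi>(3,4) assms(1) by simp
  also have "\<dots> = pmf (fdist r T c) R"
    using pmf_equiv[OF assms(1) c(1) sw_bij sw_im[OF c(1)], of T R] assms(1)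
    unfolding X_def by (simp add: sw_cc)
  also have "\<dots> \<le> pmf (fdist r T 0) R"
    using main_mono[OF assms(1,3) c0 c(1)] assms(7) c(2) by blast
  finally show ?thesis unfolding fitch_prob_eq .
qed

end
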